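(* Let $(V,\omega)$ be a vertex operator algebra. Then the set $\operatorname{Sc}(V,\omega)$ of semi-conformal vectors of $(V,\omega)$ is a Zariski closed subset of the finite-dimensional complex vector space $V_2$; in particular it is an affine algebraic variety over $\mathbb{C}$.
   Context: A vertex operator algebra $(V,Y,\mathbf 1,\omega)$ is $\mathbb Z$-graded, $V=\bigoplus_n V_n$, by the eigenvalues of $L(0)$, where $Y(\omega,z)=\sum_n L(n)z^{-n-2}$; each $V_n$ is finite dimensional and $V_n=0$ for $n\ll 0$. Write $Y(v,z)=\sum_n v_nz^{-n-1}$. A vertex operator subalgebra $(U,\omega')$ of $(V,\omega)$ is a vertex subalgebra $U\ni\mathbf 1$ together with a vector $\omega'\in U$ making $(U,Y|_U,\mathbf 1,\omega')$ a vertex operator algebra (the conformal vector $\omega'$ may differ from $\omega$). It is called semi-conformal if $L(n)|_U=L'(n)|_U$ for all $n\ge 0$, where $Y(\omega',z)=\sum_n L'(n)z^{-n-2}$ (equivalently $\omega_n|_U=\omega'_n|_U$ for all $n\ge 0$). A semi-conformal vector of $(V,\omega)$ is a vector $\omega'\in V_2$ which is the conformal vector of some semi-conformal vertex operator subalgebra. $\operatorname{Sc}(V,\omega)$ denotes the set of all semi-conformal vectors. *)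

theory Defs
  imports Complex_Main "HOL-Library.Groups_Big_Fun"
begin

text \<open>A vertex operator algebra is encoded by: a complex scalar multiplication
  sc on a type 'v (the ambient vector space), a carrier subspace V, the modes
  Y u n w = u_n w (so Y(u,z) = sum_n u_n z^(-n-1)), the vacuum vac and the
  conformal vector om.  L(n) = om_(n+1).\<close>

definition wt_space ::
  "(complex \<Rightarrow> 'v::ab_group_add \<Rightarrow> 'v) \<Rightarrow> 'v set \<Rightarrow> ('v \<Rightarrow> int \<Rightarrow> 'v \<Rightarrow> 'v) \<Rightarrow> 'v \<Rightarrow> int \<Rightarrow> 'v set"
  where "wt_space sc V Y om n = {v \<in> V. Y om 1 v = sc (of_int n) v}"

definition is_voa ::
  "(complex \<Rightarrow> 'v::ab_group_add \<Rightarrow> 'v) \<Rightarrow> 'v set \<Rightarrow> ('v \<Rightarrow> int \<Rightarrow> 'v \<Rightarrow> 'v) \<Rightarrow> 'v \<Rightarrow> 'v \<Rightarrow> bool"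
  where "is_voa sc V Y vac om \<longleftrightarrow>
    module.subspace sc V \<and> vac \<in> V \<and> om \<in> V \<and>
    \<comment> \<open>closure of V under all products\<close>
    (\<forall>u\<in>V. \<forall>w\<in>V. \<forall>n. Y u n w \<in> V) \<and>
    \<comment> \<open>bilinearity\<close>
    (\<forall>a u u' w n. u \<in> V \<longrightarrow> u' \<in> V \<longrightarrow> w \<in> V \<longrightarrow>
        Y (sc a u + u') n w = sc a (Y u n w) + Y u' n w \<and>
        Y w n (sc a u + u') = sc a (Y w n u) + Y w n u') \<and>
    \<comment> \<open>truncation\<close>
    (\<forall>u\<in>V. \<forall>w\<in>V. \<exists>N. \<forall>n\<ge>N. Y u n w = 0) \<and>
    \<comment> \<open>vacuum property Y(1,z) = id\<close>
    (\<forall>w\<in>V. \<forall>n. Y vac n w = (if n = -1 then w else 0)) \<and>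
    \<comment> \<open>creation property\<close>
    (\<forall>u\<in>V. (\<forall>n\<ge>0. Y u n vac = 0) \<and> Y u (-1) vac = u) \<and>
    \<comment> \<open>Jacobi identity, in the equivalent Borcherds (component) form\<close>
    (\<forall>u\<in>V. \<forall>v\<in>V. \<forall>w\<in>V. \<forall>m n r :: int.
        (\<Sum>i::nat. sc ((of_int m :: complex) gchoose i) (Y (Y u (r + int i) v) (m + n - int i) w))
      = (\<Sum>i::nat. sc ((-1) ^ i * ((of_int r :: complex) gchoose i))
            (Y u (m + r - int i) (Y v (n + int i) w)
             - sc ((-1) powi r) (Y v (n + r - int i) (Y u (m + int i) w))))) \<and>
    \<comment> \<open>Virasoro relations with some central charge c\<close>
    (\<exists>c::complex. \<forall>m n :: int. \<forall>w\<in>V.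
        Y om (m + 1) (Y om (n + 1) w) - Y om (n + 1) (Y om (m + 1) w)
      = sc (of_int (m - n)) (Y om (m + n + 1) w)
        + sc ((of_int m ^ 3 - of_int m) / 12 * (if m + n = 0 then c else 0)) w) \<and>
    \<comment> \<open>L(-1)-derivative property: Y(L(-1)u,z) = d/dz Y(u,z)\<close>
    (\<forall>u\<in>V. \<forall>w\<in>V. \<forall>n. Y (Y om 0 u) n w = sc (- of_int n) (Y u (n - 1) w)) \<and>
    \<comment> \<open>grading by L(0)-eigenvalues\<close>
    om \<in> wt_space sc V Y om 2 \<and>
    V \<subseteq> module.span sc (\<Union>n. wt_space sc V Y om n) \<and>
    (\<forall>n. \<exists>B. finite B \<and> B \<subseteq> wt_space sc V Y om n \<and>
           wt_space sc V Y om n \<subseteq> module.span sc B) \<and>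
    (\<exists>N. \<forall>n<N. wt_space sc V Y om n = {0})"

definition semi_conformal_subVOA ::
  "(complex \<Rightarrow> 'v::ab_group_add \<Rightarrow> 'v) \<Rightarrow> 'v set \<Rightarrow> ('v \<Rightarrow> int \<Rightarrow> 'v \<Rightarrow> 'v) \<Rightarrow> 'v \<Rightarrow> 'v
     \<Rightarrow> 'v set \<Rightarrow> 'v \<Rightarrow> bool"
  where "semi_conformal_subVOA sc V Y vac om U om' \<longleftrightarrow>
    U \<subseteq> V \<and> is_voa sc U Y vac om' \<and>
    (\<forall>n\<ge>0. \<forall>u\<in>U. Y om n u = Y om' n u)"

definition semi_conformal_vectors ::
  "(complex \<Rightarrow> 'v::ab_group_add \<Rightarrow> 'v) \<Rightarrow> 'v set \<Rightarrow> ('v \<Rightarrow> int \<Rightarrow> 'v \<Rightarrow> 'v) \<Rightarrow> 'v \<Rightarrow> 'v \<Rightarrow> 'v set"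
  where "semi_conformal_vectors sc V Y vac om =
    {om' \<in> wt_space sc V Y om 2. \<exists>U. semi_conformal_subVOA sc V Y vac om U om'}"

text \<open>Polynomial functions on a subspace W: the algebra generated by the constants
  and the (complex-)linear functionals on W. Only values on W matter.\<close>
inductive_set polyfun_on ::
  "(complex \<Rightarrow> 'v::ab_group_add \<Rightarrow> 'v) \<Rightarrow> 'v set \<Rightarrow> ('v \<Rightarrow> complex) set"
  for sc W where
  const: "(\<lambda>_. c) \<in> polyfun_on sc W"
| linear: "(\<forall>x\<in>W. \<forall>y\<in>W. \<forall>a. f (sc a x + y) = a * f x + f y) \<Longrightarrow> f \<in> polyfun_on sc W"
| add: "f \<in> polyfun_on sc W \<Longrightarrow> g \<in> polyfun_on sc W \<Longrightarrow> (\<lambda>x. f x + g x) \<in> polyfun_on sc W"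
| mult: "f \<in> polyfun_on sc W \<Longrightarrow> g \<in> polyfun_on sc W \<Longrightarrow> (\<lambda>x. f x * g x) \<in> polyfun_on sc W"

definition zariski_closed_in ::
  "(complex \<Rightarrow> 'v::ab_group_add \<Rightarrow> 'v) \<Rightarrow> 'v set \<Rightarrow> 'v set \<Rightarrow> bool"
  where "zariski_closed_in sc W S \<longleftrightarrow>
    (\<exists>P \<subseteq> polyfun_on sc W. S = {x \<in> W. \<forall>p\<in>P. p x = 0})"

end

theory Submission
  imports Defs
begin

lemma pf_sum: "finite A \<Longrightarrow> (\<And>i. i \<in> A \<Longrightarrow> g i \<in> polyfun_on sc W) \<Longrightarrow> (\<lambda>x. \<Sum>i\<in>A. g i x) \<in> polyfun_on sc W"
proof (induction A rule: finite_induct)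
  case empty
  then show ?case using polyfun_on.const[of 0 sc W] by simp
next
  case (insert a A)
  then have "(\<lambda>x. g a x + (\<Sum>i\<in>A. g i x)) \<in> polyfun_on sc W"
    by (intro polyfun_on.add) auto
  then show ?case using insert by simp
qed

lemma pf_diff: "f \<in> polyfun_on sc W \<Longrightarrow> g \<in> polyfun_on sc W \<Longrightarrow> (\<lambda>x. f x - g x) \<in> polyfun_on sc W"
proof -
  assume f: "f \<in> polyfun_on sc W" and g: "g \<in> polyfun_on sc W"
  have "(\<lambda>x. (-1::complex) * g x) \<in> polyfun_on sc W"
    using polyfun_on.mult[OF polyfun_on.const[of "-1"] g] by simp
  then have "(\<lambda>x. - g x) \<in> polyfun_on sc W" by simp
  then have "(\<lambda>x. f x + - g x) \<in> polyfun_on sc W"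
    by (rule polyfun_on.add[OF f])
  then show ?thesis by simp
qed

lemma pf_mult3: "f \<in> polyfun_on sc W \<Longrightarrow> g \<in> polyfun_on sc W \<Longrightarrow> (\<lambda>x. f x * g x * c) \<in> polyfun_on sc W"
  by (intro polyfun_on.mult polyfun_on.const)

locale voa_ctx = vector_space sc for sc :: "complex \<Rightarrow> 'v::ab_group_add \<Rightarrow> 'v" +
  fixes Y :: "'v \<Rightarrow> int \<Rightarrow> 'v \<Rightarrow> 'v" and vac om :: 'v
  assumes voa: "is_voa sc UNIV Y vac om"
begin

lemma lin12: "Y (sc a u + u') n w = sc a (Y u n w) + Y u' n w \<and> Y w n (sc a u + u') = sc a (Y w n u) + Y w n u'"
proof -
  have "\<forall>a u u' w n. u \<in> UNIV \<longrightarrow> u' \<in> UNIV \<longrightarrow> w \<in> UNIV \<longrightarrow>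
        Y (sc a u + u') n w = sc a (Y u n w) + Y u' n w \<and>
        Y w n (sc a u + u') = sc a (Y w n u) + Y w n u'"
    using voa unfolding is_voa_def by (elim conjE) assumption
  then show ?thesis by blast
qed
lemma lin1: "Y (sc a u + u') n w = sc a (Y u n w) + Y u' n w"
  using lin12 by blast
lemma lin2: "Y w n (sc a u + u') = sc a (Y w n u) + Y w n u'"
  using lin12 by blast
lemma trunc: "\<exists>N. \<forall>n\<ge>N. Y u n w = 0"
proof -
  have "\<forall>u\<in>UNIV. \<forall>w\<in>UNIV. \<exists>N. \<forall>n\<ge>N. Y u n w = 0"
    using voa unfolding is_voa_def by (elim conjE) assumption
  then show ?thesis by blast
qed
lemma vacuum: "Y vac n w = (if n = -1 then w else 0)"
proof -
  have "\<forall>w\<in>UNIV. \<forall>n. Y vac n w = (if n = -1 then w else 0)"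
    using voa unfolding is_voa_def by (elim conjE) assumption
  then show ?thesis by blast
qed
lemma creation: "n \<ge> 0 \<Longrightarrow> Y u n vac = 0" "Y u (-1) vac = u"
proof -
  have "\<forall>u\<in>UNIV. (\<forall>n\<ge>0. Y u n vac = 0) \<and> Y u (-1) vac = u"
    using voa unfolding is_voa_def by (elim conjE) assumption
  then show "n \<ge> 0 \<Longrightarrow> Y u n vac = 0" "Y u (-1) vac = u" by blast+
qed
lemma borch: "(\<Sum>i::nat. sc ((of_int m :: complex) gchoose i) (Y (Y u (r + int i) v) (m + n - int i) w))
      = (\<Sum>i::nat. sc ((-1) ^ i * ((of_int r :: complex) gchoose i))
            (Y u (m + r - int i) (Y v (n + int i) w)
             - sc ((-1) powi r) (Y v (n + r - int i) (Y u (m + int i) w))))"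
proof -
  have "\<forall>u\<in>UNIV. \<forall>v\<in>UNIV. \<forall>w\<in>UNIV. \<forall>m n r :: int.
        (\<Sum>i::nat. sc ((of_int m :: complex) gchoose i) (Y (Y u (r + int i) v) (m + n - int i) w))
      = (\<Sum>i::nat. sc ((-1) ^ i * ((of_int r :: complex) gchoose i))
            (Y u (m + r - int i) (Y v (n + int i) w)
             - sc ((-1) powi r) (Y v (n + r - int i) (Y u (m + int i) w))))"
    using voa unfolding is_voa_def by (elim conjE) assumption
  then show ?thesis by blast
qed
lemma deriv: "Y (Y om 0 u) n w = sc (- of_int n) (Y u (n - 1) w)"
proof -
  have "\<forall>u\<in>UNIV. \<forall>w\<in>UNIV. \<forall>n. Y (Y om 0 u) n w = sc (- of_int n) (Y u (n - 1) w)"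
    using voa unfolding is_voa_def by (elim conjE) assumption
  then show ?thesis by blast
qed
lemma om_wt: "om \<in> wt_space sc UNIV Y om 2"
  using voa unfolding is_voa_def by (elim conjE) assumption
lemma fin_wt: "\<exists>B. finite B \<and> B \<subseteq> wt_space sc UNIV Y om n \<and> wt_space sc UNIV Y om n \<subseteq> span B"
proof -
  have "\<forall>n. \<exists>B. finite B \<and> B \<subseteq> wt_space sc UNIV Y om n \<and>
           wt_space sc UNIV Y om n \<subseteq> span B"
    using voa unfolding is_voa_def by (elim conjE) assumption
  then show ?thesis by blast
qed
lemma low_wt: "\<exists>N. \<forall>n<N. wt_space sc UNIV Y om n = {0}"
  using voa unfolding is_voa_def by (elim conjE) assumption

lemma Y_zero1[simp]: "Y 0 n w = 0"
proof -
  have "Y 0 n w = Y 0 n w + Y 0 n w" using lin1[of 1 0 0 n w] by (simp only: scale_one add_0)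
  then show ?thesis by (simp only: add_cancel_right_right)
qed
lemma Y_zero2[simp]: "Y w n 0 = 0"
proof -
  have "Y w n 0 = Y w n 0 + Y w n 0" using lin2[of w n 1 0 0] by (simp only: scale_one add_0)
  then show ?thesis by (simp only: add_cancel_right_right)
qed
lemma Y_add1: "Y (u + u') n w = Y u n w + Y u' n w"
  using lin1[of 1 u u' n w] by simp
lemma Y_add2: "Y w n (u + u') = Y w n u + Y w n u'"
  using lin2[of w n 1 u u'] by simp
lemma Y_scale1: "Y (sc a u) n w = sc a (Y u n w)"
  using lin1[of a u 0 n w] by simp
lemma Y_scale2: "Y w n (sc a u) = sc a (Y w n u)"
  using lin2[of w n a u 0] by simp
lemma Y_neg1: "Y (- u) n w = - Y u n w"
  using Y_scale1[of "-1" u n w] by simp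
lemma Y_neg2: "Y w n (- u) = - Y w n u"
  using Y_scale2[of w n "-1" u] by simp
lemma Y_diff1: "Y (u - u') n w = Y u n w - Y u' n w"
  by (metis Y_add1 Y_neg1 diff_conv_add_uminus)
lemma Y_diff2: "Y w n (u - u') = Y w n u - Y w n u'"
  by (metis Y_add2 Y_neg2 diff_conv_add_uminus)
lemma Y_sum1: "Y (sum f A) n w = (\<Sum>i\<in>A. Y (f i) n w)"
  by (induction A rule: infinite_finite_induct) (auto simp: Y_add1)
lemma Y_sum2: "Y w n (sum f A) = (\<Sum>i\<in>A. Y w n (f i))"
  by (induction A rule: infinite_finite_induct) (auto simp: Y_add2)

lemma Sum_any_fin: "finite A \<Longrightarrow> (\<And>i. i \<notin> A \<Longrightarrow> g i = 0) \<Longrightarrow> Sum_any g = sum g A"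
  by (rule Sum_any.expand_superset) auto

lemma comm: "Sum_any (\<lambda>i::nat. sc ((of_int m :: complex) gchoose i) (Y (Y u (int i) v) (m + n - int i) w))
   = Y u m (Y v n w) - Y v n (Y u m w)"
proof -
  have "Sum_any (\<lambda>i::nat. sc ((of_int m :: complex) gchoose i) (Y (Y u (int i) v) (m + n - int i) w))
    = Sum_any (\<lambda>i::nat. sc ((-1) ^ i * ((of_int 0 :: complex) gchoose i))
            (Y u (m + 0 - int i) (Y v (n + int i) w)
             - sc ((-1) powi 0) (Y v (n + 0 - int i) (Y u (m + int i) w))))"
    using borch[of m u 0 v n w] by simp
  also have "\<dots> = sum (\<lambda>i::nat. sc ((-1) ^ i * ((of_int 0 :: complex) gchoose i))
            (Y u (m + 0 - int i) (Y v (n + int i) w)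
             - sc ((-1) powi 0) (Y v (n + 0 - int i) (Y u (m + int i) w)))) {0}"
    by (rule Sum_any_fin) (auto simp: gbinomial_0_left)
  finally show ?thesis by simp
qed

lemma wt_prod:
  assumes "Y om 1 u = sc (of_int a) u" "Y om 1 w = sc (of_int b) w"
  shows "Y om 1 (Y u j w) = sc (of_int (a + b - j - 1)) (Y u j w)"
proof -
  have g: "((1::complex) gchoose i) = 0" if "0 < i" "i \<noteq> Suc 0" for i
  proof -
    have "((1::complex) gchoose i) = of_nat (1 choose i)"
      using binomial_gbinomial[of 1 i, where 'a=complex] by simp
    also have "\<dots> = 0" using that by (simp add: binomial_eq_0)
    finally show ?thesis .
  qed
  have "((of_int 1::complex) gchoose i) = of_nat (1 choose i)" for i
      by (simp add: binomial_gbinomial)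
  have "Sum_any (\<lambda>i::nat. sc ((of_int 1 :: complex) gchoose i) (Y (Y om (int i) u) (1 + j - int i) w))
     = sum (\<lambda>i::nat. sc ((of_int 1 :: complex) gchoose i) (Y (Y om (int i) u) (1 + j - int i) w)) {0,1}"
    by (rule Sum_any_fin) (auto simp: g)
  also have "\<dots> = Y (Y om 0 u) (1 + j) w + Y (Y om 1 u) j w" by simp
  also have "\<dots> = sc (- of_int (1 + j)) (Y u j w) + sc (of_int a) (Y u j w)"
    by (simp add: deriv assms Y_scale1)
  finally have eq: "Y om 1 (Y u j w) - Y u j (Y om 1 w) = sc (- of_int (1 + j)) (Y u j w) + sc (of_int a) (Y u j w)"
    unfolding comm .
  have "Y u j (Y om 1 w) = sc (of_int b) (Y u j w)" by (simp add: assms Y_scale2)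
  with eq have "Y om 1 (Y u j w) = sc (- of_int (1 + j)) (Y u j w) + sc (of_int a) (Y u j w) + sc (of_int b) (Y u j w)"
    by (simp add: diff_eq_eq)
  also have "\<dots> = sc (- of_int (1 + j) + of_int a + of_int b) (Y u j w)"
    by (simp only: scale_left_distrib)
  also have "\<dots> = sc (of_int (a + b - j - 1)) (Y u j w)"
  proof -
    have "(- of_int (1 + j) + of_int a + of_int b :: complex) = of_int (a + b - j - 1)" by simp
    then show ?thesis by (rule arg_cong)
  qed
  finally show ?thesis .
qed


definition Cx :: "'v \<Rightarrow> 'v set" where "Cx x = {v. \<forall>k\<ge>0. Y om k v = Y x k v}"
abbreviation Vw :: "int \<Rightarrow> 'v set" where "Vw n \<equiv> wt_space sc UNIV Y om n"
definition Ux :: "'v \<Rightarrow> 'v set" where "Ux x = span (\<Union>n. Cx x \<inter> Vw n)"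

lemma Vw_iff: "v \<in> Vw n \<longleftrightarrow> Y om 1 v = sc (of_int n) v"
  by (simp add: wt_space_def)

lemma Cx_subspace: "subspace (Cx x)"
  unfolding subspace_def Cx_def by (auto simp: Y_add2 Y_scale2)

lemma Vw_subspace: "subspace (Vw n)"
  unfolding subspace_def by (auto simp: Vw_iff Y_add2 Y_scale2 scale_right_distrib mult.commute)

lemma Ux_sub_Cx: "Ux x \<subseteq> Cx x"
  unfolding Ux_def by (rule span_minimal) (auto intro: Cx_subspace)

lemma Cx_prod:
  assumes "u \<in> Cx x" "w \<in> Cx x"
  shows "Y u j w \<in> Cx x"
proof -
  have "Y om k (Y u j w) = Y x k (Y u j w)" if k: "k \<ge> 0" for k
  proof -
    have z: "Y (om - x) (int i) u = 0" for i
      using assms(1) unfolding Cx_def by (simp add: Y_diff1)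
    have zw: "Y (om - x) k w = 0"
      using assms(2) k unfolding Cx_def by (simp add: Y_diff1)
    have "Y (om - x) k (Y u j w) - Y u j (Y (om - x) k w) =
      Sum_any (\<lambda>i::nat. sc ((of_int k :: complex) gchoose i) (Y (Y (om - x) (int i) u) (k + j - int i) w))"
      by (rule comm[symmetric])
    also have "\<dots> = 0" by (simp add: z)
    finally have "Y (om - x) k (Y u j w) = 0" by (simp add: zw)
    then show ?thesis by (simp add: Y_diff1)
  qed
  then show ?thesis unfolding Cx_def by blast
qed

lemma H_prod:
  assumes "u \<in> Cx x \<inter> Vw a" "w \<in> Cx x \<inter> Vw b"
  shows "Y u j w \<in> Cx x \<inter> Vw (a + b - j - 1)"
  using assms Cx_prod[of u x w j] wt_prod[of u a w b j] by (auto simp: Vw_iff)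

lemma U_prod:
  assumes "u \<in> Ux x" "w \<in> Ux x"
  shows "Y u j w \<in> Ux x"
proof -
  have sU: "subspace (Ux x)" unfolding Ux_def by simp
  have step1: "Y u j w \<in> Ux x" if u: "u \<in> (\<Union>n. Cx x \<inter> Vw n)" and w: "w \<in> Ux x" for u w
  proof -
    have sub: "subspace {w. Y u j w \<in> Ux x}"
      using sU unfolding subspace_def by (auto simp: Y_add2 Y_scale2)
    have "Y u j w' \<in> Ux x" if "w' \<in> (\<Union>n. Cx x \<inter> Vw n)" for w'
      using u that H_prod[of u x _ w' _ j] unfolding Ux_def by (auto intro!: span_base)
    then show ?thesis using span_induct[of w "\<Union>n. Cx x \<inter> Vw n" "\<lambda>w. Y u j w \<in> Ux x", OF w[unfolded Ux_def] sub]
      by blast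
  qed
  have sub: "subspace {u. \<forall>w\<in>Ux x. Y u j w \<in> Ux x}"
    using sU unfolding subspace_def by (auto simp: Y_add1 Y_scale1)
  show ?thesis
    using span_induct[of u "\<Union>n. Cx x \<inter> Vw n" "\<lambda>u. \<forall>w\<in>Ux x. Y u j w \<in> Ux x", OF assms(1)[unfolded Ux_def] sub]
      step1 assms(2) by blast
qed


lemma g3: "(a::complex) gchoose 3 = a*(a-1)*(a-2)/6"
  by (simp add: gbinomial_prod_rev eval_nat_numeral atLeast0_lessThan_Suc field_simps)

lemma vir_x:
  assumes xC: "x \<in> Cx x" and x2: "x \<in> Vw 2" and e2: "Y om 2 x = 0"
    and e3: "Y om 3 x = sc c0 vac" and e4: "\<forall>k\<ge>4. Y om k x = 0"
  shows "Y x (m+1) (Y x (n+1) w) - Y x (n+1) (Y x (m+1) w) = sc (of_int (m-n)) (Y x (m+n+1) w)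
     + sc ((of_int m ^ 3 - of_int m) / 12 * (if m+n=0 then 2*c0 else 0)) w"
proof -
  have xx: "Y x (int i) x = Y om (int i) x" for i using xC unfolding Cx_def by simp
  define T where "T i = sc ((of_int (m+1) :: complex) gchoose i) (Y (Y x (int i) x) (m+1+(n+1) - int i) w)" for i
  have "Y x (m+1) (Y x (n+1) w) - Y x (n+1) (Y x (m+1) w) = Sum_any T"
    unfolding T_def by (rule comm[symmetric])
  also have "\<dots> = sum T {0,1,2,3}"
  proof (rule Sum_any_fin)
    fix i :: nat assume "i \<notin> {0,1,2,3}"
    then have "int i \<ge> 4" by auto
    then show "T i = 0" unfolding T_def using e4 xx[of i] by simp
  qed simp
  also have "\<dots> = T 0 + T 1 + T 2 + T 3" by (simp add: add.assoc)
  also have "T 0 = sc (- of_int (m+n+2)) (Y x (m+n+1) w)"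
  proof -
    have "T 0 = Y (Y om 0 x) (m+n+2) w" unfolding T_def using xx[of 0] by (simp add: ac_simps)
    also have "\<dots> = sc (- of_int (m+n+2)) (Y x (m+n+1) w)"
    proof -
      have "m + n + 2 - 1 = m + n + 1" by simp
      then show ?thesis using deriv[of x "m+n+2" w] by metis
    qed
    finally show ?thesis .
  qed
  also have "T 1 = sc (of_int (m+1) * 2) (Y x (m+n+1) w)"
  proof -
    have x1: "Y om 1 x = sc 2 x" using x2 by (simp add: Vw_iff)
    have "T 1 = sc (of_int (m+1)) (Y (sc 2 x) (m+n+1) w)" unfolding T_def using xx[of 1] x1
      by (simp add: ac_simps)
    then show ?thesis by (simp add: Y_scale1)
  qed
  also have "T 2 = 0" unfolding T_def using xx[of 2] e2 by simp
  also have "T 3 = sc (((of_int (m+1)) gchoose 3) * c0) (if m + n = 0 then w else 0)"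
  proof -
    have ix: "m + 1 + (n + 1) - int 3 = m + n - 1" by simp
    have "T 3 = sc ((of_int (m+1)) gchoose 3) (Y (sc c0 vac) (m+n-1) w)" unfolding T_def ix using xx[of 3] e3
      by simp
    also have "\<dots> = sc (((of_int (m+1)) gchoose 3) * c0) (if m + n = 0 then w else 0)"
      by (simp add: Y_scale1 vacuum)
    finally show ?thesis .
  qed
  finally have L: "Y x (m+1) (Y x (n+1) w) - Y x (n+1) (Y x (m+1) w) =
     sc (- of_int (m+n+2)) (Y x (m+n+1) w) + sc (of_int (m+1) * 2) (Y x (m+n+1) w) + 0
     + sc (((of_int (m+1)) gchoose 3) * c0) (if m + n = 0 then w else 0)" .
  have a1: "sc (- of_int (m+n+2)) (Y x (m+n+1) w) + sc (of_int (m+1) * 2) (Y x (m+n+1) w)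
      = sc (of_int (m-n)) (Y x (m+n+1) w)"
  proof -
    have "sc (- of_int (m+n+2)) (Y x (m+n+1) w) + sc (of_int (m+1) * 2) (Y x (m+n+1) w)
      = sc (- of_int (m+n+2) + of_int (m+1) * 2) (Y x (m+n+1) w)" by (simp only: scale_left_distrib)
    also have "(- of_int (m+n+2) + of_int (m+1) * 2 :: complex) = of_int (m - n)" by simp
    finally show ?thesis .
  qed
  have a2: "sc (((of_int (m+1)) gchoose 3) * c0) (if m + n = 0 then w else 0)
     = sc ((of_int m ^ 3 - of_int m) / 12 * (if m+n=0 then 2*c0 else 0)) w"
  proof (cases "m + n = 0")
    case True
    have "((of_int (m+1) :: complex) gchoose 3) * c0 = (of_int m ^ 3 - of_int m) / 12 * (2*c0)"
      unfolding g3 by (simp add: field_simps power3_eq_cube)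
    then show ?thesis using True by simp
  qed simp
  show ?thesis using L a1 a2 by simp
qed


lemma wtU_iff: "Ux x \<subseteq> Cx x \<Longrightarrow> wt_space sc (Ux x) Y x n = Ux x \<inter> Vw n"
  unfolding wt_space_def Cx_def by (force)

lemma Ux_voa:
  assumes xC: "x \<in> Cx x" and x2: "x \<in> Vw 2" and e2: "Y om 2 x = 0"
    and e3: "Y om 3 x = sc c0 vac" and e4: "\<forall>k\<ge>4. Y om k x = 0"
  shows "is_voa sc (Ux x) Y vac x"
proof -
  have UC: "Ux x \<subseteq> Cx x" by (rule Ux_sub_Cx)
  have HU: "Cx x \<inter> Vw n \<subseteq> Ux x" for n unfolding Ux_def by (auto intro: span_base)
  have vacC: "vac \<in> Cx x \<inter> Vw 0" by (simp add: Cx_def Vw_iff creation)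
  have xU: "x \<in> Ux x" using HU[of 2] xC x2 by auto
  have x1: "Y x 1 x = sc 2 x" using xC x2 by (simp add: Vw_iff Cx_def)
  have wt: "wt_space sc (Ux x) Y x n = Ux x \<inter> Vw n" for n by (rule wtU_iff[OF UC])
  have fin: "\<exists>B. finite B \<and> B \<subseteq> wt_space sc (Ux x) Y x n \<and> wt_space sc (Ux x) Y x n \<subseteq> span B" for n
  proof -
    obtain B0 where B0: "finite B0" "B0 \<subseteq> Vw n" "Vw n \<subseteq> span B0" using fin_wt[of n] by (elim exE conjE)
    obtain B where B: "B \<subseteq> wt_space sc (Ux x) Y x n" "independent B" "wt_space sc (Ux x) Y x n \<subseteq> span B"
      by (rule basis_exists[of "wt_space sc (Ux x) Y x n"])
    have "wt_space sc (Ux x) Y x n \<subseteq> Vw n" unfolding wt[of n] by (rule Int_lower2)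
    then have "B \<subseteq> span B0" using B(1) B0(3) by (meson subset_trans)
    then have "finite B" using independent_span_bound[OF B0(1) B(2)] by blast
    then show ?thesis using B(1) B(3) by (intro exI[of _ B] conjI)
  qed
  have low: "\<exists>N. \<forall>n<N. wt_space sc (Ux x) Y x n = {0}"
  proof -
    obtain N where N: "\<forall>n<N. Vw n = {0}" using low_wt by blast
    have "0 \<in> Ux x" unfolding Ux_def by (rule span_zero)
    then show ?thesis using N wt by (intro exI[of _ N]) auto
  qed
  have spanU: "Ux x \<subseteq> span (\<Union>n. wt_space sc (Ux x) Y x n)"
  proof -
    have sub: "(\<Union>n. Cx x \<inter> Vw n) \<subseteq> (\<Union>n. wt_space sc (Ux x) Y x n)"
    proof
      fix v assume "v \<in> (\<Union>n. Cx x \<inter> Vw n)"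
      then obtain n where "v \<in> Cx x \<inter> Vw n" by blast
      then have "v \<in> wt_space sc (Ux x) Y x n" using HU[of n] unfolding wt[of n] by blast
      then show "v \<in> (\<Union>n. wt_space sc (Ux x) Y x n)" by blast
    qed
    have "Ux x = span (\<Union>n. Cx x \<inter> Vw n)" by (rule Ux_def)
    also have "\<dots> \<subseteq> span (\<Union>n. wt_space sc (Ux x) Y x n)" by (rule span_mono[OF sub])
    finally show ?thesis .
  qed
  have derU: "Y (Y x 0 u) n w = sc (- of_int n) (Y u (n - 1) w)" if "u \<in> Ux x" for u w n
  proof -
    have "Y x 0 u = Y om 0 u" using that UC unfolding Cx_def by auto
    then show ?thesis by (simp add: deriv)
  qed
  have virU: "\<exists>c::complex. \<forall>m n :: int. \<forall>w\<in>Ux x.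
        Y x (m + 1) (Y x (n + 1) w) - Y x (n + 1) (Y x (m + 1) w)
      = sc (of_int (m - n)) (Y x (m + n + 1) w)
        + sc ((of_int m ^ 3 - of_int m) / 12 * (if m + n = 0 then c else 0)) w"
  proof (intro exI allI ballI)
    fix m n w
    show "Y x (m + 1) (Y x (n + 1) w) - Y x (n + 1) (Y x (m + 1) w)
      = sc (of_int (m - n)) (Y x (m + n + 1) w)
        + sc ((of_int m ^ 3 - of_int m) / 12 * (if m + n = 0 then 2 * c0 else 0)) w"
      by (rule vir_x[OF assms])
  qed
  show ?thesis
    unfolding is_voa_def
    apply (intro conjI)
    subgoal unfolding Ux_def by simp
    subgoal using vacC HU[of 0] by blast
    subgoal by (rule xU)
    subgoal using U_prod by blast
    subgoal using lin1 lin2 by blast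
    subgoal using trunc by blast
    subgoal using vacuum by blast
    subgoal using creation by blast
    subgoal using borch by blast
    subgoal by (rule virU)
    subgoal using derU by blast
    subgoal using xU x1 by (simp add: wt_space_def)
    subgoal by (rule spanU)
    subgoal using fin by blast
    subgoal by (rule low)
    done
qed


definition E :: "'v \<Rightarrow> bool" where
  "E x \<longleftrightarrow> x \<in> Cx x \<and> Y om 2 x = 0 \<and> Y om 3 x \<in> span {vac} \<and> (\<forall>k\<ge>4. Y om k x = 0)"

lemma necessity:
  assumes "semi_conformal_subVOA sc UNIV Y vac om U x"
  shows "E x"
proof -
  have sc0: "\<forall>n\<ge>0. \<forall>u\<in>U. Y om n u = Y x n u" and vU: "is_voa sc U Y vac x"
    using assms unfolding semi_conformal_subVOA_def by blast+
  have xU: "x \<in> U" and vacU: "vac \<in> U" using vU unfolding is_voa_def by blast+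
  have cre: "\<forall>u\<in>U. (\<forall>n\<ge>0. Y u n vac = 0) \<and> Y u (-1) vac = u"
    using vU unfolding is_voa_def by (elim conjE) assumption
  have "\<exists>c::complex. \<forall>m n :: int. \<forall>w\<in>U.
        Y x (m + 1) (Y x (n + 1) w) - Y x (n + 1) (Y x (m + 1) w)
      = sc (of_int (m - n)) (Y x (m + n + 1) w)
        + sc ((of_int m ^ 3 - of_int m) / 12 * (if m + n = 0 then c else 0)) w"
    using vU unfolding is_voa_def by (elim conjE) assumption
  then obtain c where vir: "\<And>m n w. w \<in> U \<Longrightarrow>
        Y x (m + 1) (Y x (n + 1) w) - Y x (n + 1) (Y x (m + 1) w)
      = sc (of_int (m - n)) (Y x (m + n + 1) w)
        + sc ((of_int m ^ 3 - of_int m) / 12 * (if m + n = 0 then c else 0)) w" by blast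
  have xk: "Y x k x = sc ((of_int (k-1) ^ 3 - of_int (k-1)) / 12 * (if k = 3 then c else 0)) vac"
    if k: "k \<ge> 2" for k
  proof -
    have a: "Y x (k - 1 + 1) vac = 0" using cre xU k by simp
    have b: "Y x (k - 1 - 1) vac = 0" using cre xU k by simp
    have x: "Y x (-2 + 1) vac = x" using cre xU by simp
    have "Y x (k - 1 + 1) (Y x (-2 + 1) vac) - Y x (-2 + 1) (Y x (k - 1 + 1) vac)
      = sc (of_int (k - 1 - -2)) (Y x (k - 1 + -2 + 1) vac)
        + sc ((of_int (k-1) ^ 3 - of_int (k-1)) / 12 * (if k - 1 + -2 = 0 then c else 0)) vac"
      by (rule vir[OF vacU])
    moreover have "k - 1 + -2 + 1 = k - 1 - 1" by simp
    moreover have "(k - 1 + -2 = 0) = (k = 3)" by simp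
    ultimately show ?thesis using a b x by simp
  qed
  have C: "x \<in> Cx x" using sc0 xU unfolding Cx_def by blast
  have e2: "Y om 2 x = 0" using sc0 xU xk[of 2] by simp
  have e3: "Y om 3 x \<in> span {vac}"
    using sc0 xU xk[of 3] by (simp add: span_singleton) blast
  have e4: "\<forall>k\<ge>4. Y om k x = 0" using sc0 xU xk by simp
  show ?thesis unfolding E_def using C e2 e3 e4 by blast
qed

lemma sufficiency:
  assumes "x \<in> Vw 2" "E x"
  shows "semi_conformal_subVOA sc UNIV Y vac om (Ux x) x"
proof -
  obtain c0 where c0: "Y om 3 x = sc c0 vac" using assms(2) unfolding E_def span_singleton by blast
  have "is_voa sc (Ux x) Y vac x" using Ux_voa[of x c0] assms c0 unfolding E_def by blast
  moreover have "\<forall>n\<ge>0. \<forall>u\<in>Ux x. Y om n u = Y x n u" using Ux_sub_Cx unfolding Cx_def by blast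
  ultimately show ?thesis unfolding semi_conformal_subVOA_def by blast
qed

lemma Sc_eq: "semi_conformal_vectors sc UNIV Y vac om = {x \<in> Vw 2. E x}"
  unfolding semi_conformal_vectors_def using necessity sufficiency by blast


definition lin :: "('v \<Rightarrow> complex) \<Rightarrow> bool" where
  "lin f \<longleftrightarrow> (\<forall>x y a. f (sc a x + y) = a * f x + f y)"

lemma lin_zero: "lin f \<Longrightarrow> f 0 = 0"
proof -
  assume "lin f"
  then have "f (sc 1 0 + 0) = 1 * f 0 + f 0" unfolding lin_def by blast
  then show ?thesis by simp
qed
lemma lin_add: "lin f \<Longrightarrow> f (x + y) = f x + f y"
proof -
  assume "lin f"
  then have "f (sc 1 x + y) = 1 * f x + f y" unfolding lin_def by blast
  then show ?thesis by simp
qed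
lemma lin_scale: "lin f \<Longrightarrow> f (sc a x) = a * f x"
proof -
  assume l: "lin f"
  then have "f (sc a x + 0) = a * f x + f 0" unfolding lin_def by blast
  then show ?thesis using lin_zero[OF l] by simp
qed
lemma lin_diff: "lin f \<Longrightarrow> f (x - y) = f x - f y"
  using lin_add[of f "x - y" y] by simp
lemma lin_sum: "lin f \<Longrightarrow> f (sum g A) = (\<Sum>i\<in>A. f (g i))"
  by (induction A rule: infinite_finite_induct) (auto simp: lin_zero lin_add)

lemma sep:
  assumes S: "subspace S" and v: "v \<notin> S"
  shows "\<exists>f. lin f \<and> (\<forall>s\<in>S. f s = 0) \<and> f v \<noteq> 0"
proof -
  obtain B0 where B0: "B0 \<subseteq> S" "independent B0" "S \<subseteq> span B0"
    by (rule basis_exists[of S])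
  have spB0: "span B0 = S" using B0 S by (simp add: span_subspace)
  have vB0: "v \<notin> span B0" using v spB0 by simp
  have ind: "independent (insert v B0)" by (rule independent_insertI[OF vB0 B0(2)])
  define B where "B = extend_basis (insert v B0)"
  have indB: "independent B" and spB: "span B = UNIV" and sup: "insert v B0 \<subseteq> B"
    using ind extend_basis_superset[OF ind] independent_extend_basis[OF ind] span_extend_basis[OF ind]
    unfolding B_def by auto
  define f where "f y = representation B y v" for y
  have "lin f" unfolding lin_def f_def
    using indB spB by (simp add: representation_add representation_scale span_scale)
  moreover have "f s = 0" if "s \<in> S" for s
  proof -
    have "s \<in> span B0" using that spB0 by simp
    then have "representation B s = representation B0 s"
      using sup by (intro representation_extend[OF indB]) auto
    moreover have "v \<notin> B0" using vB0 span_base by blast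
    ultimately show ?thesis unfolding f_def using representation_ne_zero[of B0 s v] by auto
  qed
  moreover have "f v = 1" unfolding f_def using representation_basis[OF indB, of v] sup by simp
  ultimately show ?thesis by (intro exI[of _ f]) auto
qed


lemma zar: "zariski_closed_in sc (Vw 2) {x \<in> Vw 2. E x}"
proof -
  let ?W = "Vw 2"
  obtain B0 where B0: "finite B0" "B0 \<subseteq> ?W" "?W \<subseteq> span B0" using fin_wt[of 2] by (elim exE conjE)
  obtain BW where BW: "BW \<subseteq> ?W" "independent BW" "?W \<subseteq> span BW"
    by (rule basis_exists[of ?W])
  have "BW \<subseteq> span B0" using BW(1) B0(3) by (meson subset_trans)
  then have finBW: "finite BW" using independent_span_bound[OF B0(1) BW(2)] by blast
  define cr where "cr b y = representation BW y b" for b y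
  have crlin: "cr b (sc a x + y) = a * cr b x + cr b y" if "x \<in> ?W" "y \<in> ?W" for b a x y
  proof -
    have xs: "x \<in> span BW" "y \<in> span BW" using that BW(3) by auto
    then have "sc a x \<in> span BW" by (intro span_scale) (rule xs(1))
    then show ?thesis unfolding cr_def
      using xs BW(2) by (simp add: representation_add representation_scale)
  qed
  have expand: "x = (\<Sum>b\<in>BW. sc (cr b x) b)" if "x \<in> ?W" for x
    unfolding cr_def using sum_representation_eq[OF BW(2) _ finBW order_refl, of x] that BW(3) by auto
  define q where "q f k x = (\<Sum>b'\<in>BW. \<Sum>b\<in>BW. cr b' x * cr b x * f (Y b k b'))" for f k x
  have qeq: "q f k x = f (Y x k x)" if f: "lin f" and xW: "x \<in> ?W" for f k x
  proof -
    define s where "s = (\<Sum>b\<in>BW. sc (cr b x) b)"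
    have e: "x = s" unfolding s_def by (rule expand[OF xW])
    have "Y x k x = Y s k s" using e by simp
    also have "\<dots> = (\<Sum>b'\<in>BW. sc (cr b' x) (\<Sum>b\<in>BW. sc (cr b x) (Y b k b')))"
      unfolding s_def by (simp add: Y_sum1 Y_sum2 Y_scale1 Y_scale2)
    finally have "f (Y x k x) = (\<Sum>b'\<in>BW. cr b' x * (\<Sum>b\<in>BW. cr b x * f (Y b k b')))"
      using f by (simp add: lin_sum lin_scale)
    then show ?thesis unfolding q_def by (simp add: sum_distrib_left mult.assoc)
  qed
  define P1 where "P1 = (\<lambda>(f,k). (\<lambda>x. f (Y om k x) - q f k x)) ` {(f,k). lin f \<and> k \<ge> 0}"
  define P2 where "P2 = (\<lambda>(f,k). (\<lambda>x. f (Y om k x))) ` {(f,k). lin f \<and> (k = 2 \<or> k \<ge> 4)}"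
  define P3 where "P3 = (\<lambda>f. (\<lambda>x. f (Y om 3 x))) ` {f. lin f \<and> f vac = 0}"
  define P where "P = P1 \<union> P2 \<union> P3"
  have linpf: "(\<lambda>x. f (Y om k x)) \<in> polyfun_on sc ?W" if "lin f" for f k
    by (rule polyfun_on.linear) (use that in \<open>simp add: lin2 lin_def\<close>)
  have crpf: "cr b \<in> polyfun_on sc ?W" for b
    by (rule polyfun_on.linear) (simp add: crlin)
  have qpf: "q f k \<in> polyfun_on sc ?W" for f k
  proof -
    have "(\<lambda>x. \<Sum>b'\<in>BW. \<Sum>b\<in>BW. cr b' x * cr b x * f (Y b k b')) \<in> polyfun_on sc ?W"
      by (intro pf_sum finBW pf_mult3 crpf)
    then show ?thesis unfolding q_def[abs_def] .
  qed
  have Ppf: "P \<subseteq> polyfun_on sc ?W"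
  proof
    fix p assume "p \<in> P"
    then consider "p \<in> P1" | "p \<in> P2" | "p \<in> P3" unfolding P_def by blast
    then show "p \<in> polyfun_on sc ?W"
    proof cases
      case 1
      then obtain f k where "lin f" "p = (\<lambda>x. f (Y om k x) - q f k x)" unfolding P1_def by auto
      then show ?thesis using pf_diff[OF linpf qpf] by simp
    next
      case 2
      then obtain f k where "lin f" "p = (\<lambda>x. f (Y om k x))" unfolding P2_def by auto
      then show ?thesis using linpf by simp
    next
      case 3
      then obtain f where "lin f" "p = (\<lambda>x. f (Y om 3 x))" unfolding P3_def by auto
      then show ?thesis using linpf by simp
    qed
  qed
  have zero: "E x \<longleftrightarrow> (\<forall>p\<in>P. p x = 0)" if xW: "x \<in> ?W" for x
  proof
    assume Ex: "E x"
    then have C: "\<And>k. k \<ge> 0 \<Longrightarrow> Y om k x = Y x k x" and e2: "Y om 2 x = 0"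
      and e3: "Y om 3 x \<in> span {vac}" and e4: "\<And>k. k \<ge> 4 \<Longrightarrow> Y om k x = 0"
    proof -
      have "x \<in> Cx x" "Y om 2 x = 0" "Y om 3 x \<in> span {vac}" "\<forall>k\<ge>4. Y om k x = 0"
        using Ex unfolding E_def by blast+
      then show "\<And>k. k \<ge> 0 \<Longrightarrow> Y om k x = Y x k x" "Y om 2 x = 0"
        "Y om 3 x \<in> span {vac}" "\<And>k. k \<ge> 4 \<Longrightarrow> Y om k x = 0"
        unfolding Cx_def by blast+
    qed
    obtain c where c: "Y om 3 x = sc c vac" using e3 unfolding span_singleton by blast
    show "\<forall>p\<in>P. p x = 0"
    proof
      fix p assume "p \<in> P"
      then consider "p \<in> P1" | "p \<in> P2" | "p \<in> P3" unfolding P_def by blast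
      then show "p x = 0"
      proof cases
        case 1
        then obtain f k where f: "lin f" "k \<ge> 0" "p = (\<lambda>x. f (Y om k x) - q f k x)" unfolding P1_def by auto
        then show ?thesis using qeq[OF f(1) xW, of k] C[OF f(2)] by simp
      next
        case 2
        then obtain f k where f: "lin f" "k = 2 \<or> k \<ge> 4" "p = (\<lambda>x. f (Y om k x))" unfolding P2_def by auto
        then have "Y om k x = 0" using e2 e4 by auto
        then show ?thesis using f lin_zero by simp
      next
        case 3
        then obtain f where f: "lin f" "f vac = 0" "p = (\<lambda>x. f (Y om 3 x))" unfolding P3_def by auto
        then show ?thesis using c lin_scale[OF f(1)] by simp
      qed
    qed
  next
    assume Z: "\<forall>p\<in>P. p x = 0"
    have C: "Y om k x = Y x k x" if k: "k \<ge> 0" for k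
    proof (rule ccontr)
      assume "Y om k x \<noteq> Y x k x"
      then have "Y om k x - Y x k x \<notin> {0}" by simp
      then obtain f where f: "lin f" "f (Y om k x - Y x k x) \<noteq> 0"
        using sep[OF subspace_single_0] by blast
      have "(\<lambda>x. f (Y om k x) - q f k x) \<in> P1" unfolding P1_def
        by (rule image_eqI[where x="(f,k)"]) (use f k in auto)
      then have "(\<lambda>x. f (Y om k x) - q f k x) \<in> P" unfolding P_def by (rule UnI1[OF UnI1])
      from bspec[OF Z this] have "f (Y om k x) - q f k x = 0" by simp
      then show False using f qeq[OF f(1) xW] by (simp add: lin_diff)
    qed
    have Z0: "Y om k x = 0" if k: "k = 2 \<or> k \<ge> 4" for k
    proof (rule ccontr)
      assume "Y om k x \<noteq> 0"
      then have "Y om k x \<notin> {0}" by simp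
      then obtain f where f: "lin f" "f (Y om k x) \<noteq> 0"
        using sep[OF subspace_single_0] by blast
      have "(\<lambda>x. f (Y om k x)) \<in> P2" unfolding P2_def
        by (rule image_eqI[where x="(f,k)"]) (use f k in auto)
      then have "(\<lambda>x. f (Y om k x)) \<in> P" unfolding P_def by (rule UnI1[OF UnI2])
      from bspec[OF Z this] have "f (Y om k x) = 0" by simp
      then show False using f by simp
    qed
    have e3: "Y om 3 x \<in> span {vac}"
    proof (rule ccontr)
      assume "Y om 3 x \<notin> span {vac}"
      then obtain f where f: "lin f" "\<forall>s\<in>span {vac}. f s = 0" "f (Y om 3 x) \<noteq> 0"
        using sep[OF subspace_span] by blast
      have "f vac = 0" using f(2) span_base[of vac "{vac}"] by simp
      then have "(\<lambda>x. f (Y om 3 x)) \<in> P3" unfolding P3_def using f(1) by blast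
      then have "(\<lambda>x. f (Y om 3 x)) \<in> P" unfolding P_def by (rule UnI2)
      from bspec[OF Z this] have "f (Y om 3 x) = 0" by simp
      then show False using f by simp
    qed
    have "\<forall>k\<ge>0. Y om k x = Y x k x" using C by blast
    moreover have "\<forall>k\<ge>4. Y om k x = 0" using Z0 by simp
    ultimately have "x \<in> Cx x" "\<forall>k\<ge>4. Y om k x = 0" unfolding Cx_def by blast+
    then show "E x" unfolding E_def using Z0[of 2] e3 by blast
  qed
  have "{x \<in> ?W. E x} = {x \<in> ?W. \<forall>p\<in>P. p x = 0}" using zero by blast
  then show ?thesis unfolding zariski_closed_in_def using Ppf by blast
qed

end
theorem theorem1p1:
  fixes sc :: "complex \<Rightarrow> 'v::ab_group_add \<Rightarrow> 'v"
    and Y :: "'v \<Rightarrow> int \<Rightarrow> 'v \<Rightarrow> 'v"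
    and vac om :: 'v
  assumes "vector_space sc"
    and "is_voa sc UNIV Y vac om"
  shows "zariski_closed_in sc (wt_space sc UNIV Y om 2) (semi_conformal_vectors sc UNIV Y vac om)"
proof -
  interpret V: voa_ctx sc Y vac om
    by (intro voa_ctx.intro voa_ctx_axioms.intro assms)
  show ?thesis using V.zar V.Sc_eq by simp
qed

end
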